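(* Let $\lambda\in(0,1)$ and let $G$ be a finite simple connected graph with $n\ge 3$ vertices. Then $$\min_{2\le D\le n-1}\frac{\lambda^{D}+\frac{1}{n-D}\cdot\frac{\lambda^{D}-\lambda}{\lambda-1}}{D\lambda^{D}+\frac{1}{n-D}\cdot\frac{\lambda-D\lambda^{D}+(D-1)\lambda^{D+1}}{(\lambda-1)^2}}\;\le\; mN^{e}_{\lambda}(G)\;\le\;1.$$ The lower bound is attained for a broom on $n$ vertices (at its starting vertex), and the upper bound is attained for every vertex-transitive graph.
   Context: $d(u,v)$ denotes graph distance and $[u]$ the set of neighbours of $u$. $t^{e}_{\lambda}(u)=\sum_{v\in V\setminus\{u\}} d(u,v)\lambda^{d(u,v)}$. For vertices $k,l$, $s^{kl}$ is the number of shortest $k$–$l$ paths and, for an edge $uv$, $s^{kl}_{uv}$ is the number of those passing through the edge $uv$. The exponential edge betweenness of an edge $uv$ is $b^{e}_{\lambda}(uv)=\sum_{\{k,l\}}\frac{s^{kl}_{uv}}{s^{kl}}\lambda^{d(k,l)}$ over all unordered pairs $\{k,l\}$ of distinct vertices; $c^{e}_{\lambda}(u)=\sum_{v\in[u]}b^{e}_{\lambda}(uv)$. The networkness of $u$ is $N^{e}_{\lambda}(u)=c^{e}_{\lambda}(u)/t^{e}_{\lambda}(u)$ and $mN^{e}_{\lambda}(G)=\min\{N^{e}_{\lambda}(u):u\in V(G)\}$. A broom on $n$ vertices (with parameter $D$, $1\le D\le n-1$) is the graph consisting of a path $u=v_0v_1\cdots v_D$ together with $n-D-1$ further vertices each adjacent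 only to $v_{D-1}$; $u=v_0$ is its starting vertex. *)

theory Defs
  imports Main "HOL.Real"
begin

definition simple_graph :: "'a set \<Rightarrow> ('a \<Rightarrow> 'a \<Rightarrow> bool) \<Rightarrow> bool" where
  "simple_graph V E \<longleftrightarrow> finite V \<and> (\<forall>x y. E x y \<longrightarrow> x \<in> V \<and> y \<in> V)
     \<and> (\<forall>x y. E x y \<longrightarrow> E y x) \<and> (\<forall>x. \<not> E x x)"

definition walk :: "'a set \<Rightarrow> ('a \<Rightarrow> 'a \<Rightarrow> bool) \<Rightarrow> 'a list \<Rightarrow> bool" where
  "walk V E p \<longleftrightarrow> p \<noteq> [] \<and> set p \<subseteq> V \<and> (\<forall>i. Suc i < length p \<longrightarrow> E (p ! i) (p ! Suc i))"

definition connected_graph :: "'a set \<Rightarrow> ('a \<Rightarrow> 'a \<Rightarrow> bool) \<Rightarrow> bool" where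
  "connected_graph V E \<longleftrightarrow> (\<forall>u\<in>V. \<forall>v\<in>V. \<exists>p. walk V E p \<and> hd p = u \<and> last p = v)"

definition gdist :: "'a set \<Rightarrow> ('a \<Rightarrow> 'a \<Rightarrow> bool) \<Rightarrow> 'a \<Rightarrow> 'a \<Rightarrow> nat" where
  "gdist V E u v = (LEAST k. \<exists>p. walk V E p \<and> hd p = u \<and> last p = v \<and> length p = Suc k)"

definition shortest_paths :: "'a set \<Rightarrow> ('a \<Rightarrow> 'a \<Rightarrow> bool) \<Rightarrow> 'a \<Rightarrow> 'a \<Rightarrow> 'a list set" where
  "shortest_paths V E k l = {p. walk V E p \<and> hd p = k \<and> last p = l \<and> length p = Suc (gdist V E k l)}"

definition nsp :: "'a set \<Rightarrow> ('a \<Rightarrow> 'a \<Rightarrow> bool) \<Rightarrow> 'a \<Rightarrow> 'a \<Rightarrow> nat" where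
  "nsp V E k l = card (shortest_paths V E k l)"

definition nsp_edge :: "'a set \<Rightarrow> ('a \<Rightarrow> 'a \<Rightarrow> bool) \<Rightarrow> 'a \<Rightarrow> 'a \<Rightarrow> 'a \<Rightarrow> 'a \<Rightarrow> nat" where
  "nsp_edge V E k l u v = card {p \<in> shortest_paths V E k l.
      \<exists>i. Suc i < length p \<and> {p ! i, p ! Suc i} = {u, v}}"

text \<open>Exponential edge betweenness; the sum over unordered pairs {k,l} of distinct vertices
  is written as half of the sum over ordered pairs (the summand is symmetric in k,l).\<close>
definition exp_edge_betw :: "'a set \<Rightarrow> ('a \<Rightarrow> 'a \<Rightarrow> bool) \<Rightarrow> real \<Rightarrow> 'a \<Rightarrow> 'a \<Rightarrow> real" where
  "exp_edge_betw V E lam u v = (1/2) * (\<Sum>k\<in>V. \<Sum>l\<in>V - {k}.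
      real (nsp_edge V E k l u v) / real (nsp V E k l) * lam ^ gdist V E k l)"

definition exp_c :: "'a set \<Rightarrow> ('a \<Rightarrow> 'a \<Rightarrow> bool) \<Rightarrow> real \<Rightarrow> 'a \<Rightarrow> real" where
  "exp_c V E lam u = (\<Sum>v\<in>{v\<in>V. E u v}. exp_edge_betw V E lam u v)"

definition exp_t :: "'a set \<Rightarrow> ('a \<Rightarrow> 'a \<Rightarrow> bool) \<Rightarrow> real \<Rightarrow> 'a \<Rightarrow> real" where
  "exp_t V E lam u = (\<Sum>v\<in>V - {u}. real (gdist V E u v) * lam ^ gdist V E u v)"

definition networkness :: "'a set \<Rightarrow> ('a \<Rightarrow> 'a \<Rightarrow> bool) \<Rightarrow> real \<Rightarrow> 'a \<Rightarrow> real" where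
  "networkness V E lam u = exp_c V E lam u / exp_t V E lam u"

definition min_networkness :: "'a set \<Rightarrow> ('a \<Rightarrow> 'a \<Rightarrow> bool) \<Rightarrow> real \<Rightarrow> real" where
  "min_networkness V E lam = Min (networkness V E lam ` V)"

definition vertex_transitive :: "'a set \<Rightarrow> ('a \<Rightarrow> 'a \<Rightarrow> bool) \<Rightarrow> bool" where
  "vertex_transitive V E \<longleftrightarrow> (\<forall>u\<in>V. \<forall>v\<in>V. \<exists>\<sigma>. bij_betw \<sigma> V V
      \<and> (\<forall>x\<in>V. \<forall>y\<in>V. E x y \<longleftrightarrow> E (\<sigma> x) (\<sigma> y)) \<and> \<sigma> u = v)"

text \<open>Broom on n vertices {0..<n} with parameter D: path 0-1-...-D, and vertices D+1..n-1
  each adjacent only to D-1. Starting vertex is 0.\<close>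
definition broom_V :: "nat \<Rightarrow> nat set" where
  "broom_V n = {0..<n}"

definition broom_E :: "nat \<Rightarrow> nat \<Rightarrow> nat \<Rightarrow> nat \<Rightarrow> bool" where
  "broom_E n D i j \<longleftrightarrow> i < n \<and> j < n \<and>
     ((j = Suc i \<and> j \<le> D) \<or> (i = Suc j \<and> i \<le> D) \<or> (D < i \<and> j = D - 1) \<or> (D < j \<and> i = D - 1))"

definition lb_fun :: "nat \<Rightarrow> real \<Rightarrow> nat \<Rightarrow> real" where
  "lb_fun n lam D =
     (lam ^ D + 1 / real (n - D) * ((lam ^ D - lam) / (lam - 1))) /
     (real D * lam ^ D + 1 / real (n - D) *
        ((lam - real D * lam ^ D + (real D - 1) * lam ^ (D + 1)) / (lam - 1)^2))"

end

theory Submission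
  imports Defs
begin


lemma walk_single[simp]: "walk V E [x] \<longleftrightarrow> x \<in> V"
  by (auto simp: walk_def)

lemma walk_Cons2: "walk V E (x # y # p) \<longleftrightarrow> x \<in> V \<and> E x y \<and> walk V E (y # p)"
proof
  assume w: "walk V E (x # y # p)"
  have "E x y" using w unfolding walk_def by (metis One_nat_def length_Cons nth_Cons_0 nth_Cons_Suc zero_less_Suc Suc_less_eq)
  moreover have "walk V E (y # p)" unfolding walk_def
  proof (intro conjI allI impI)
    show "set (y # p) \<subseteq> V" using w by (auto simp: walk_def)
    fix i assume "Suc i < length (y # p)"
    then have "Suc (Suc i) < length (x # y # p)" by simp
    then have "E ((x # y # p) ! Suc i) ((x # y # p) ! Suc (Suc i))" using w unfolding walk_def by blast
    then show "E ((y # p) ! i) ((y # p) ! Suc i)" by simp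
  qed simp
  ultimately show "x \<in> V \<and> E x y \<and> walk V E (y # p)" using w by (auto simp: walk_def)
next
  assume "x \<in> V \<and> E x y \<and> walk V E (y # p)"
  then show "walk V E (x # y # p)" unfolding walk_def
    by (auto simp: less_Suc_eq_0_disj nth_Cons split: nat.splits)
qed

lemma walk_ConsD: "walk V E (x # p) \<Longrightarrow> p \<noteq> [] \<Longrightarrow> walk V E p"
  by (cases p) (auto simp: walk_Cons2)

lemma walk_append:
  "walk V E p \<Longrightarrow> walk V E q \<Longrightarrow> E (last p) (hd q) \<Longrightarrow> walk V E (p @ q)"
proof (induction p rule: induct_list012)
  case 1 then show ?case by (simp add: walk_def)
next
  case (2 x) then show ?case by (cases q) (auto simp: walk_Cons2)
next
  case (3 x y zs) then show ?case by (auto simp: walk_Cons2)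
qed

lemma walk_append_tl:
  assumes "walk V E p" "walk V E q" "last p = hd q"
  shows "walk V E (p @ tl q)"
proof (cases "tl q")
  case Nil then show ?thesis using assms by simp
next
  case (Cons a r)
  have "q = hd q # a # r" using assms(2) Cons unfolding walk_def by (metis list.collapse)
  then have "E (hd q) a" "walk V E (a # r)" using assms(2) by (metis walk_Cons2)+
  then show ?thesis using assms Cons walk_append[of V E p "a # r"] by simp
qed

lemma last_append_tl: "last p = hd q \<Longrightarrow> q \<noteq> [] \<Longrightarrow> p \<noteq> [] \<Longrightarrow> last (p @ tl q) = last q"
  by (cases q) (auto simp: last_append)

lemma walk_rev:
  assumes sym: "\<And>x y. E x y \<Longrightarrow> E y x"
  shows "walk V E p \<Longrightarrow> walk V E (rev p)"
proof (induction p rule: induct_list012)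
  case 1 then show ?case by (simp add: walk_def)
next
  case (2 x) then show ?case by simp
next
  case (3 x y zs)
  have "walk V E (rev (y # zs))" using 3 by (simp add: walk_Cons2)
  moreover have "E y x" using 3 sym by (simp add: walk_Cons2)
  ultimately show ?case using walk_append[of V E "rev (y#zs)" "[x]"] 3 by (auto simp: walk_Cons2)
qed

lemma walk_take: "walk V E p \<Longrightarrow> 0 < k \<Longrightarrow> walk V E (take k p)"
  unfolding walk_def by (auto dest: in_set_takeD)

lemma walk_drop: "walk V E p \<Longrightarrow> k < length p \<Longrightarrow> walk V E (drop k p)"
  unfolding walk_def by (auto dest: in_set_dropD)



locale cgraph =
  fixes V :: "'a set" and E :: "'a \<Rightarrow> 'a \<Rightarrow> bool"
  assumes sg: "simple_graph V E" and cg: "connected_graph V E"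
begin

lemma finV: "finite V" using sg by (simp add: simple_graph_def)
lemma EV: "E x y \<Longrightarrow> x \<in> V \<and> y \<in> V" using sg by (simp add: simple_graph_def)
lemma Esym: "E x y \<Longrightarrow> E y x" using sg by (simp add: simple_graph_def)
lemma Eirr: "\<not> E x x" using sg by (simp add: simple_graph_def)

lemma walk_setV: "walk V E p \<Longrightarrow> x \<in> set p \<Longrightarrow> x \<in> V" by (auto simp: walk_def)

lemma ex_walk: "u \<in> V \<Longrightarrow> v \<in> V \<Longrightarrow> \<exists>p. walk V E p \<and> hd p = u \<and> last p = v"
  using cg by (simp add: connected_graph_def)

lemma gdist_le: "walk V E p \<Longrightarrow> hd p = u \<Longrightarrow> last p = v \<Longrightarrow> gdist V E u v \<le> length p - 1"
  unfolding gdist_def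
  by (rule Least_le) (rule exI[of _ p], auto simp: walk_def)

lemma gdist_ex: assumes "u \<in> V" "v \<in> V"
  shows "\<exists>p. walk V E p \<and> hd p = u \<and> last p = v \<and> length p = Suc (gdist V E u v)"
proof -
  obtain p where p: "walk V E p" "hd p = u" "last p = v" using ex_walk assms by blast
  then have "\<exists>k p. walk V E p \<and> hd p = u \<and> last p = v \<and> length p = Suc k"
    by (intro exI[of _ "length p - 1"] exI[of _ p]) (auto simp: walk_def)
  then show ?thesis unfolding gdist_def by (rule LeastI_ex)
qed

lemma sp_nonempty: "u \<in> V \<Longrightarrow> v \<in> V \<Longrightarrow> shortest_paths V E u v \<noteq> {}"
  using gdist_ex by (auto simp: shortest_paths_def)

lemma sp_finite: "finite (shortest_paths V E u v)"
proof -
  have "shortest_paths V E u v \<subseteq> {xs. set xs \<subseteq> V \<and> length xs = Suc (gdist V E u v)}"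
    by (auto simp: shortest_paths_def walk_def)
  then show ?thesis using finite_lists_length_eq[OF finV] finite_subset by blast
qed

lemma nsp_pos: "u \<in> V \<Longrightarrow> v \<in> V \<Longrightarrow> 0 < nsp V E u v"
  unfolding nsp_def using sp_nonempty sp_finite by (simp add: card_gt_0_iff)

lemma gdist_sym_le: assumes "u \<in> V" "v \<in> V" shows "gdist V E v u \<le> gdist V E u v"
proof -
  obtain p where p: "walk V E p" "hd p = u" "last p = v" "length p = Suc (gdist V E u v)"
    using gdist_ex assms by blast
  have "walk V E (rev p)" using p(1) by (intro walk_rev) (auto simp: Esym)
  moreover have "hd (rev p) = v" "last (rev p) = u" using p by (auto simp: hd_rev last_rev)
  ultimately show ?thesis using gdist_le[of "rev p" v u] p by simp
qed

lemma gdist_sym: "u \<in> V \<Longrightarrow> v \<in> V \<Longrightarrow> gdist V E v u = gdist V E u v"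
  using gdist_sym_le by (simp add: le_antisym)

lemma gdist_self: "u \<in> V \<Longrightarrow> gdist V E u u = 0"
  using gdist_le[of "[u]" u u] by simp

lemma gdist_pos: assumes "u \<in> V" "v \<in> V" "u \<noteq> v" shows "0 < gdist V E u v"
proof (rule ccontr)
  assume "\<not> 0 < gdist V E u v"
  then obtain p where "walk V E p" "hd p = u" "last p = v" "length p = 1"
    using gdist_ex assms by fastforce
  then show False using assms by (cases p) auto
qed

lemma sp_walk: "p \<in> shortest_paths V E k l \<Longrightarrow> walk V E p"
  and sp_hd: "p \<in> shortest_paths V E k l \<Longrightarrow> hd p = k"
  and sp_last: "p \<in> shortest_paths V E k l \<Longrightarrow> last p = l"
  and sp_len: "p \<in> shortest_paths V E k l \<Longrightarrow> length p = Suc (gdist V E k l)"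
  by (auto simp: shortest_paths_def)

lemma sp_distinct: assumes p: "p \<in> shortest_paths V E k l" shows "distinct p"
proof (rule ccontr)
  assume "\<not> distinct p"
  then obtain i j where ij: "i < j" "j < length p" "p ! i = p ! j"
    by (metis distinct_conv_nth linorder_neqE_nat)
  let ?q = "take (Suc i) p @ tl (drop j p)"
  have w: "walk V E p" using sp_walk[OF p] .
  have wt: "walk V E (take (Suc i) p)" using walk_take[OF w] by simp
  have wd: "walk V E (drop j p)" using walk_drop[OF w] ij by simp
  have lt: "last (take (Suc i) p) = p ! i" using ij by (simp add: take_Suc_conv_app_nth)
  have hdd: "hd (drop j p) = p ! j" using ij by (simp add: hd_drop_conv_nth)
  have wq: "walk V E ?q" using walk_append_tl[OF wt wd] lt hdd ij by simp
  have "hd ?q = k" using sp_hd[OF p] ij by (cases p) auto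
  moreover have "last ?q = l" using last_append_tl[of "take (Suc i) p" "drop j p"] lt hdd ij sp_last[OF p]
    by (simp add: last_drop) (metis gr_implies_not0 list.size(3))
  ultimately have "gdist V E k l \<le> length ?q - 1" using gdist_le wq by blast
  moreover have "length ?q < length p" using ij by simp
  ultimately show False using sp_len[OF p] by simp
qed

lemma sp_level: assumes p: "p \<in> shortest_paths V E u w" and i: "i < length p"
  shows "gdist V E u (p ! i) = i"
proof -
  have w: "walk V E p" using sp_walk[OF p] .
  have wt: "walk V E (take (Suc i) p)" using walk_take[OF w] by simp
  have lt: "last (take (Suc i) p) = p ! i" using i by (simp add: take_Suc_conv_app_nth)
  have hu: "hd (take (Suc i) p) = u" using sp_hd[OF p] i by (cases p) auto
  have le: "gdist V E u (p ! i) \<le> i" using gdist_le[OF wt hu lt] i by simp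
  have uV: "u \<in> V" using hu wt by (metis hd_in_set walk_def walk_setV)
  have piV: "p ! i \<in> V" using w i by (auto simp: walk_def)
  show ?thesis
  proof (rule ccontr)
    assume "gdist V E u (p ! i) \<noteq> i"
    then have lt2: "gdist V E u (p ! i) < i" using le by simp
    obtain q where q: "walk V E q" "hd q = u" "last q = p ! i" "length q = Suc (gdist V E u (p ! i))"
      using gdist_ex[OF uV piV] by blast
    have wd: "walk V E (drop i p)" using walk_drop[OF w] i by simp
    have hdd: "hd (drop i p) = p ! i" using i by (simp add: hd_drop_conv_nth)
    have wq: "walk V E (q @ tl (drop i p))" using walk_append_tl[OF q(1) wd] q hdd by simp
    have "hd (q @ tl (drop i p)) = u" using q by (cases q) auto
    moreover have "last (q @ tl (drop i p)) = w" using last_append_tl[of q "drop i p"] q hdd i sp_last[OF p]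
      by (simp add: last_drop walk_def)
    ultimately have "gdist V E u w \<le> length (q @ tl (drop i p)) - 1" using gdist_le wq by blast
    then show False using q lt2 i sp_len[OF p] by simp
  qed
qed

end


lemma fiber_sum:
  assumes "finite S" "finite N" "\<forall>p\<in>S. f p \<in> N" "\<forall>p\<in>S. \<forall>v\<in>N. Q p v \<longleftrightarrow> v = f p"
  shows "(\<Sum>v\<in>N. card {p\<in>S. Q p v}) = card S"
proof -
  have "\<forall>p\<in>S. card {v\<in>N. Q p v} = 1"
  proof
    fix p assume "p \<in> S"
    then have "{v\<in>N. Q p v} = {f p}" using assms by auto
    then show "card {v\<in>N. Q p v} = 1" by simp
  qed
  from sum_multicount[OF assms(2,1) this] show ?thesis by simp
qed

definition uses :: "'a list \<Rightarrow> 'a \<Rightarrow> 'a \<Rightarrow> bool" where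
  "uses p u v \<longleftrightarrow> (\<exists>i. Suc i < length p \<and> {p ! i, p ! Suc i} = {u, v})"

lemma nsp_edge_uses: "nsp_edge V E k l u v = card {p \<in> shortest_paths V E k l. uses p u v}"
  by (simp add: nsp_edge_def uses_def)

context cgraph begin

abbreviation "Nb u \<equiv> {v\<in>V. E u v}"

lemma finNb: "finite (Nb u)" using finV by simp

lemma sp_len2: assumes "p \<in> shortest_paths V E k l" "k \<in> V" "l \<in> V" "k \<noteq> l"
  shows "2 \<le> length p"
  using sp_len[OF assms(1)] gdist_pos[OF assms(2-4)] by simp

lemma T_start: assumes "u \<in> V" "l \<in> V" "l \<noteq> u"
  shows "(\<Sum>v\<in>Nb u. nsp_edge V E u l u v) = nsp V E u l"
  unfolding nsp_edge_uses nsp_def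
proof (rule fiber_sum[where f = "\<lambda>p. p ! 1"])
  show "finite (shortest_paths V E u l)" by (rule sp_finite)
  show "finite (Nb u)" by (rule finNb)
  show "\<forall>p\<in>shortest_paths V E u l. p ! 1 \<in> Nb u"
  proof
    fix p assume p: "p \<in> shortest_paths V E u l"
    have l2: "2 \<le> length p" using sp_len2[OF p] assms by auto
    have "p ! 0 = u" using sp_hd[OF p] l2 by (cases p) auto
    moreover have "E (p ! 0) (p ! Suc 0)" using sp_walk[OF p] l2 unfolding walk_def by auto
    ultimately show "p ! 1 \<in> Nb u" using EV by auto
  qed
  show "\<forall>p\<in>shortest_paths V E u l. \<forall>v\<in>Nb u. uses p u v = (v = p ! 1)"
  proof (intro ballI)
    fix p v assume p: "p \<in> shortest_paths V E u l" and v: "v \<in> Nb u"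
    have l2: "2 \<le> length p" using sp_len2[OF p] assms by auto
    have p0: "p ! 0 = u" using sp_hd[OF p] l2 by (cases p) auto
    have d: "distinct p" using sp_distinct[OF p] .
    have uv: "u \<noteq> v" using v Eirr by auto
    show "uses p u v = (v = p ! 1)"
    proof
      assume "uses p u v"
      then obtain i where i: "Suc i < length p" "{p ! i, p ! Suc i} = {u, v}" unfolding uses_def by blast
      then consider "p ! i = u" "p ! Suc i = v" | "p ! i = v" "p ! Suc i = u" by (auto simp: doubleton_eq_iff)
      then show "v = p ! 1"
      proof cases
        case 1
        have "i = 0" using nth_eq_iff_index_eq[OF d, of i 0] 1 p0 i l2 by force
        then show ?thesis using 1 by simp
      next
        case 2
        have "Suc i = 0" using nth_eq_iff_index_eq[OF d, of "Suc i" 0] 2 p0 i l2 by force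
        then show ?thesis by simp
      qed
    next
      assume "v = p ! 1"
      then show "uses p u v" unfolding uses_def using l2 p0 by (intro exI[of _ 0]) auto
    qed
  qed
qed

lemma T_end: assumes "u \<in> V" "k \<in> V" "k \<noteq> u"
  shows "(\<Sum>v\<in>Nb u. nsp_edge V E k u u v) = nsp V E k u"
  unfolding nsp_edge_uses nsp_def
proof (rule fiber_sum[where f = "\<lambda>p. p ! (length p - 2)"])
  show "finite (shortest_paths V E k u)" by (rule sp_finite)
  show "finite (Nb u)" by (rule finNb)
  show "\<forall>p\<in>shortest_paths V E k u. p ! (length p - 2) \<in> Nb u"
  proof
    fix p assume p: "p \<in> shortest_paths V E k u"
    have l2: "2 \<le> length p" using sp_len2[OF p] assms by auto
    have "p ! Suc (length p - 2) = u" proof -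
      have "p \<noteq> []" using l2 by auto
      then have "p ! (length p - 1) = u" using sp_last[OF p] last_conv_nth[of p] by simp
      moreover have "Suc (length p - 2) = length p - 1" using l2 by simp
      ultimately show ?thesis by simp
    qed
    moreover have "Suc (length p - 2) < length p" using l2 by simp
    then have "E (p ! (length p - 2)) (p ! Suc (length p - 2))" using sp_walk[OF p] unfolding walk_def by blast
    ultimately have "E (p ! (length p - 2)) u" by simp
    then show "p ! (length p - 2) \<in> Nb u" using EV[of "p ! (length p - 2)" u] Esym[of "p ! (length p - 2)" u] by simp
  qed
  show "\<forall>p\<in>shortest_paths V E k u. \<forall>v\<in>Nb u. uses p u v = (v = p ! (length p - 2))"
  proof (intro ballI)
    fix p v assume p: "p \<in> shortest_paths V E k u" and v: "v \<in> Nb u"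
    have l2: "2 \<le> length p" using sp_len2[OF p] assms by auto
    have pl: "p ! Suc (length p - 2) = u" proof -
      have "p \<noteq> []" using l2 by auto
      then have "p ! (length p - 1) = u" using sp_last[OF p] last_conv_nth[of p] by simp
      moreover have "Suc (length p - 2) = length p - 1" using l2 by simp
      ultimately show ?thesis by simp
    qed
    have d: "distinct p" using sp_distinct[OF p] .
    have uv: "u \<noteq> v" using v Eirr by auto
    show "uses p u v = (v = p ! (length p - 2))"
    proof
      assume "uses p u v"
      then obtain i where i: "Suc i < length p" "{p ! i, p ! Suc i} = {u, v}" unfolding uses_def by blast
      then consider "p ! i = u" "p ! Suc i = v" | "p ! i = v" "p ! Suc i = u" by (auto simp: doubleton_eq_iff)
      then show "v = p ! (length p - 2)"
      proof cases
        case 1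
        have "i = Suc (length p - 2)" using nth_eq_iff_index_eq[OF d, of i "Suc (length p - 2)"] 1 pl i l2 by simp
        then show ?thesis using i l2 by simp
      next
        case 2
        have "Suc i = Suc (length p - 2)" using nth_eq_iff_index_eq[OF d, of "Suc i" "Suc (length p - 2)"] 2 pl i l2 by simp
        then show ?thesis using 2 by simp
      qed
    next
      assume "v = p ! (length p - 2)"
      moreover have "Suc (length p - 2) < length p" using l2 by simp
      ultimately show "uses p u v" unfolding uses_def using pl
        by (intro exI[of _ "length p - 2"]) (simp add: insert_commute)
    qed
  qed
qed

lemma T_leaf: assumes "Nb u = {w}" "k \<noteq> u" "l \<noteq> u"
  shows "nsp_edge V E k l u v = 0"
proof -
  have e: "{p \<in> shortest_paths V E k l. uses p u v} = {}"
  proof (rule ccontr)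
    assume "{p \<in> shortest_paths V E k l. uses p u v} \<noteq> {}"
    then obtain p i where p: "p \<in> shortest_paths V E k l" and i: "Suc i < length p" "{p ! i, p ! Suc i} = {u, v}"
      unfolding uses_def by blast
    then obtain j where j: "j < length p" "p ! j = u" by (metis Suc_lessD doubleton_eq_iff lessI order.strict_trans)
    have w: "walk V E p" using sp_walk[OF p] .
    have "j \<noteq> 0" using sp_hd[OF p] j assms(2) by (metis hd_conv_nth list.size(3) not_less0)
    moreover have "j \<noteq> length p - 1" using sp_last[OF p] j assms(3) by (metis last_conv_nth list.size(3) not_less0)
    ultimately have j1: "0 < j" "Suc j < length p" using j by auto
    have "Suc (j - 1) < length p" using j1 by simp
    then have "E (p ! (j - 1)) (p ! Suc (j - 1))" using w unfolding walk_def by blast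
    then have "E (p ! (j - 1)) u" using j1 j by simp
    then have e1: "E u (p ! (j - 1))" by (rule Esym)
    have nbw: "x = w" if "E u x" for x
    proof -
      have "x \<in> Nb u" using EV that by auto
      then show "x = w" using assms(1) by auto
    qed
    have a: "p ! (j - 1) = w" using nbw[OF e1] .
    have "E (p ! j) (p ! Suc j)" using w j1 unfolding walk_def by blast
    then have "p ! Suc j = w" using nbw j by simp
    then have "p ! (j - 1) = p ! Suc j" using a by simp
    then have "j - 1 = Suc j" using nth_eq_iff_index_eq[OF sp_distinct[OF p], of "j - 1" "Suc j"] j1 by simp
    then show False by simp
  qed
  show ?thesis unfolding nsp_edge_uses e by simp
qed

end


context cgraph begin

definition gg :: "real \<Rightarrow> 'a \<Rightarrow> 'a \<Rightarrow> 'a \<Rightarrow> real" where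
  "gg lam u k l = (\<Sum>v\<in>Nb u. real (nsp_edge V E k l u v)) / real (nsp V E k l) * lam ^ gdist V E k l"

definition S0 :: "real \<Rightarrow> 'a \<Rightarrow> real" where
  "S0 lam u = (\<Sum>l\<in>V - {u}. lam ^ gdist V E u l)"

lemma c_expand: "exp_c V E lam u = (1/2) * (\<Sum>k\<in>V. \<Sum>l\<in>V - {k}. gg lam u k l)"
proof -
  have "exp_c V E lam u = (\<Sum>v\<in>Nb u. (1/2) * (\<Sum>k\<in>V. \<Sum>l\<in>V - {k}.
      real (nsp_edge V E k l u v) / real (nsp V E k l) * lam ^ gdist V E k l))"
    by (simp add: exp_c_def exp_edge_betw_def)
  also have "\<dots> = (1/2) * (\<Sum>v\<in>Nb u. \<Sum>k\<in>V. \<Sum>l\<in>V - {k}.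
      real (nsp_edge V E k l u v) / real (nsp V E k l) * lam ^ gdist V E k l)"
    by (simp only: sum_distrib_left)
  also have "\<dots> = (1/2) * (\<Sum>k\<in>V. \<Sum>v\<in>Nb u. \<Sum>l\<in>V - {k}.
      real (nsp_edge V E k l u v) / real (nsp V E k l) * lam ^ gdist V E k l)"
    by (subst sum.swap) (rule refl)
  also have "\<dots> = (1/2) * (\<Sum>k\<in>V. \<Sum>l\<in>V - {k}. \<Sum>v\<in>Nb u.
      real (nsp_edge V E k l u v) / real (nsp V E k l) * lam ^ gdist V E k l)"
    by (rule arg_cong[where f="\<lambda>x. (1/2) * x"], rule sum.cong, rule refl, rule sum.swap)
  also have "\<dots> = (1/2) * (\<Sum>k\<in>V. \<Sum>l\<in>V - {k}. gg lam u k l)"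
    by (simp add: gg_def sum_divide_distrib sum_distrib_right)
  finally show ?thesis .
qed

lemma gg_nonneg: "0 < lam \<Longrightarrow> 0 \<le> gg lam u k l"
  by (simp add: gg_def sum_nonneg)

lemma gg_start: "u \<in> V \<Longrightarrow> l \<in> V \<Longrightarrow> l \<noteq> u \<Longrightarrow> gg lam u u l = lam ^ gdist V E u l"
proof -
  assume a: "u \<in> V" "l \<in> V" "l \<noteq> u"
  have "(\<Sum>v\<in>Nb u. real (nsp_edge V E u l u v)) = real (nsp V E u l)"
    using T_start[OF a] by (metis of_nat_sum)
  then show ?thesis using nsp_pos[OF a(1,2)] by (simp add: gg_def)
qed

lemma gg_end: "u \<in> V \<Longrightarrow> k \<in> V \<Longrightarrow> k \<noteq> u \<Longrightarrow> gg lam u k u = lam ^ gdist V E u k"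
proof -
  assume a: "u \<in> V" "k \<in> V" "k \<noteq> u"
  have "(\<Sum>v\<in>Nb u. real (nsp_edge V E k u u v)) = real (nsp V E k u)"
    using T_end[OF a] by (metis of_nat_sum)
  then show ?thesis using nsp_pos[OF a(2,1)] gdist_sym[OF a(1,2)] by (simp add: gg_def)
qed

lemma c_split: assumes u: "u \<in> V"
  shows "exp_c V E lam u = S0 lam u + (1/2) * (\<Sum>k\<in>V - {u}. \<Sum>l\<in>V - {k} - {u}. gg lam u k l)"
proof -
  have fin: "finite V" by (rule finV)
  have "(\<Sum>k\<in>V. \<Sum>l\<in>V - {k}. gg lam u k l) = (\<Sum>l\<in>V - {u}. gg lam u u l) + (\<Sum>k\<in>V - {u}. \<Sum>l\<in>V - {k}. gg lam u k l)"
    using sum.remove[OF fin u] by simp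
  also have "(\<Sum>l\<in>V - {u}. gg lam u u l) = S0 lam u"
    unfolding S0_def using gg_start u by (intro sum.cong) auto
  also have "(\<Sum>k\<in>V - {u}. \<Sum>l\<in>V - {k}. gg lam u k l) = (\<Sum>k\<in>V - {u}. lam ^ gdist V E u k + (\<Sum>l\<in>V - {k} - {u}. gg lam u k l))"
  proof (rule sum.cong)
    fix k assume k: "k \<in> V - {u}"
    have "(\<Sum>l\<in>V - {k}. gg lam u k l) = gg lam u k u + (\<Sum>l\<in>V - {k} - {u}. gg lam u k l)"
      using sum.remove[of "V - {k}" u] fin k u by auto
    then show "(\<Sum>l\<in>V - {k}. gg lam u k l) = lam ^ gdist V E u k + (\<Sum>l\<in>V - {k} - {u}. gg lam u k l)"
      using gg_end[of u k lam] k u by simp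
  qed simp
  also have "\<dots> = S0 lam u + (\<Sum>k\<in>V - {u}. \<Sum>l\<in>V - {k} - {u}. gg lam u k l)"
    by (simp add: sum.distrib S0_def)
  finally show ?thesis unfolding c_expand by simp
qed

lemma c_ge: "u \<in> V \<Longrightarrow> 0 < lam \<Longrightarrow> S0 lam u \<le> exp_c V E lam u"
  unfolding c_split by (auto intro!: sum_nonneg gg_nonneg)

lemma c_leaf: assumes "u \<in> V" "Nb u = {w}" shows "exp_c V E lam u = S0 lam u"
proof -
  have "gg lam u k l = 0" if "k \<in> V - {u}" "l \<in> V - {k} - {u}" for k l
    using T_leaf[OF assms(2)] that by (simp add: gg_def)
  then show ?thesis unfolding c_split[OF assms(1)] by simp
qed

end


context cgraph begin

lemma edges_of_sp: assumes p: "p \<in> shortest_paths V E k l"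
  shows "card {a \<in> Sigma V Nb. uses p (fst a) (snd a)} = 2 * gdist V E k l"
proof -
  let ?d = "gdist V E k l"
  have len: "length p = Suc ?d" using sp_len[OF p] .
  have w: "walk V E p" using sp_walk[OF p] .
  have d: "distinct p" using sp_distinct[OF p] .
  have ed: "E (p ! i) (p ! Suc i)" if "i < ?d" for i using w that len unfolding walk_def by simp
  let ?f = "\<lambda>i. (p ! i, p ! Suc i)" and ?g = "\<lambda>i. (p ! Suc i, p ! i)"
  have eq: "{a \<in> Sigma V Nb. uses p (fst a) (snd a)} = ?f ` {..<?d} \<union> ?g ` {..<?d}"
  proof (intro equalityI subsetI)
    fix a assume "a \<in> {a \<in> Sigma V Nb. uses p (fst a) (snd a)}"
    then obtain i where i: "Suc i < length p" "{p ! i, p ! Suc i} = {fst a, snd a}"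
      unfolding uses_def by blast
    then have "a = ?f i \<or> a = ?g i" by (cases a) (auto simp: doubleton_eq_iff)
    then show "a \<in> ?f ` {..<?d} \<union> ?g ` {..<?d}" using i len by auto
  next
    fix a assume "a \<in> ?f ` {..<?d} \<union> ?g ` {..<?d}"
    then obtain i where i: "i < ?d" "a = ?f i \<or> a = ?g i" by blast
    have e1: "E (p ! i) (p ! Suc i)" using ed i by simp
    have e2: "E (p ! Suc i) (p ! i)" using Esym[OF e1] .
    have "a \<in> Sigma V Nb" using i e1 e2 EV[OF e1] by auto
    moreover have "uses p (fst a) (snd a)" unfolding uses_def using i len
      by (intro exI[of _ i]) (auto simp: insert_commute)
    ultimately show "a \<in> {a \<in> Sigma V Nb. uses p (fst a) (snd a)}" by simp
  qed
  have inj: "p ! i = p ! j \<Longrightarrow> i < length p \<Longrightarrow> j < length p \<Longrightarrow> i = j" for i j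
    using nth_eq_iff_index_eq[OF d] by simp
  have i1: "inj_on ?f {..<?d}" by (rule inj_onI) (use inj len in auto)
  have i2: "inj_on ?g {..<?d}" by (rule inj_onI) (use inj len in auto)
  have dj: "?f ` {..<?d} \<inter> ?g ` {..<?d} = {}"
  proof (rule ccontr)
    assume "?f ` {..<?d} \<inter> ?g ` {..<?d} \<noteq> {}"
    then obtain i j where ij: "i < ?d" "j < ?d" "p ! i = p ! Suc j" "p ! Suc i = p ! j" by auto
    then have "i = Suc j" "Suc i = j" using inj len by auto
    then show False by simp
  qed
  show ?thesis unfolding eq
    by (subst card_Un_disjoint) (use dj card_image[OF i1] card_image[OF i2] in auto)
qed

lemma edge_count: assumes "k \<in> V" "l \<in> V"
  shows "(\<Sum>u\<in>V. \<Sum>v\<in>Nb u. nsp_edge V E k l u v) = 2 * gdist V E k l * nsp V E k l"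
proof -
  have "(\<Sum>u\<in>V. \<Sum>v\<in>Nb u. nsp_edge V E k l u v) = (\<Sum>a\<in>Sigma V Nb. nsp_edge V E k l (fst a) (snd a))"
    using sum.Sigma[of V Nb "\<lambda>u v. nsp_edge V E k l u v"] finV by (simp add: case_prod_beta)
  also have "\<dots> = (\<Sum>a\<in>Sigma V Nb. card {p \<in> shortest_paths V E k l. uses p (fst a) (snd a)})"
    by (simp add: nsp_edge_uses)
  also have "\<dots> = 2 * gdist V E k l * card (shortest_paths V E k l)"
    by (rule sum_multicount) (use finV sp_finite edges_of_sp in auto)
  finally show ?thesis by (simp add: nsp_def)
qed

lemma sum_c_t: "(\<Sum>u\<in>V. exp_c V E lam u) = (\<Sum>u\<in>V. exp_t V E lam u)"
proof -
  have "(\<Sum>u\<in>V. exp_c V E lam u) = (1/2) * (\<Sum>k\<in>V. \<Sum>l\<in>V - {k}. \<Sum>u\<in>V. gg lam u k l)"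
    unfolding c_expand
  proof -
    have "(\<Sum>u\<in>V. 1 / 2 * (\<Sum>k\<in>V. \<Sum>l\<in>V - {k}. gg lam u k l)) = (1/2) * (\<Sum>u\<in>V. \<Sum>k\<in>V. \<Sum>l\<in>V - {k}. gg lam u k l)"
      by (simp only: sum_distrib_left)
    also have "\<dots> = (1/2) * (\<Sum>k\<in>V. \<Sum>u\<in>V. \<Sum>l\<in>V - {k}. gg lam u k l)"
      by (subst sum.swap) (rule refl)
    also have "\<dots> = (1/2) * (\<Sum>k\<in>V. \<Sum>l\<in>V - {k}. \<Sum>u\<in>V. gg lam u k l)"
      by (rule arg_cong[where f="\<lambda>x. (1/2) * x"], rule sum.cong, rule refl, rule sum.swap)
    finally show "(\<Sum>u\<in>V. 1 / 2 * (\<Sum>k\<in>V. \<Sum>l\<in>V - {k}. gg lam u k l)) = (1/2) * (\<Sum>k\<in>V. \<Sum>l\<in>V - {k}. \<Sum>u\<in>V. gg lam u k l)" .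
  qed
  also have "\<dots> = (1/2) * (\<Sum>k\<in>V. \<Sum>l\<in>V - {k}. 2 * (real (gdist V E k l) * lam ^ gdist V E k l))"
  proof (rule arg_cong[where f="\<lambda>x. (1/2) * x"], intro sum.cong refl)
    fix k l assume k: "k \<in> V" and l: "l \<in> V - {k}"
    have "(\<Sum>u\<in>V. gg lam u k l) = (\<Sum>u\<in>V. \<Sum>v\<in>Nb u. real (nsp_edge V E k l u v)) / real (nsp V E k l) * lam ^ gdist V E k l"
      by (simp add: gg_def sum_divide_distrib sum_distrib_right)
    also have "(\<Sum>u\<in>V. \<Sum>v\<in>Nb u. real (nsp_edge V E k l u v)) = real (2 * gdist V E k l * nsp V E k l)"
    proof -
      have "(\<Sum>u\<in>V. \<Sum>v\<in>Nb u. real (nsp_edge V E k l u v)) = real (\<Sum>u\<in>V. \<Sum>v\<in>Nb u. nsp_edge V E k l u v)"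
        by simp
      moreover have "(\<Sum>u\<in>V. \<Sum>v\<in>Nb u. nsp_edge V E k l u v) = 2 * gdist V E k l * nsp V E k l"
        using edge_count[of k l] k l by blast
      ultimately show ?thesis by (simp only:)
    qed
    finally show "(\<Sum>u\<in>V. gg lam u k l) = 2 * (real (gdist V E k l) * lam ^ gdist V E k l)"
      using nsp_pos[of k l] k l by simp
  qed
  also have "\<dots> = (\<Sum>u\<in>V. exp_t V E lam u)"
    by (simp add: exp_t_def sum_distrib_left[symmetric])
  finally show ?thesis .
qed

end


context cgraph begin

lemma walk_map: assumes "\<forall>x\<in>V. s x \<in> V" "\<forall>x\<in>V. \<forall>y\<in>V. E x y \<longrightarrow> E (s x) (s y)"
  shows "walk V E p \<Longrightarrow> walk V E (map s p)"
  unfolding walk_def using assms by (auto simp: EV)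

lemma gdist_map_le: assumes "\<forall>x\<in>V. s x \<in> V" "\<forall>x\<in>V. \<forall>y\<in>V. E x y \<longrightarrow> E (s x) (s y)" "u \<in> V" "v \<in> V"
  shows "gdist V E (s u) (s v) \<le> gdist V E u v"
proof -
  obtain p where p: "walk V E p" "hd p = u" "last p = v" "length p = Suc (gdist V E u v)"
    using gdist_ex assms by blast
  have "walk V E (map s p)" using walk_map[OF assms(1,2) p(1)] .
  moreover have "hd (map s p) = s u" "last (map s p) = s v" using p by (auto simp: walk_def hd_map last_map)
  ultimately show ?thesis using gdist_le[of "map s p"] p by fastforce
qed

lemma uses_map: assumes "inj_on s V" "set p \<subseteq> V" "u \<in> V" "v \<in> V"
  shows "uses (map s p) (s u) (s v) \<longleftrightarrow> uses p u v"
proof -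
  have "{s (p ! i), s (p ! Suc i)} = {s u, s v} \<longleftrightarrow> {p ! i, p ! Suc i} = {u, v}" if "Suc i < length p" for i
  proof -
    have a: "p ! i \<in> V" "p ! Suc i \<in> V" using assms(2) that by auto
    have "s x = s y \<longleftrightarrow> x = y" if "x \<in> V" "y \<in> V" for x y using assms(1) that by (meson inj_on_eq_iff)
    then show ?thesis using a assms(3,4) by (auto simp: doubleton_eq_iff)
  qed
  then have h: "\<forall>i. Suc i < length p \<longrightarrow> ({map s p ! i, map s p ! Suc i} = {s u, s v}) = ({p ! i, p ! Suc i} = {u, v})"
    by simp
  show ?thesis unfolding uses_def length_map using h by blast
qed

end

locale cauto = cgraph V E for V :: "'a set" and E +
  fixes s :: "'a \<Rightarrow> 'a"
  assumes bij: "bij_betw s V V" and pres: "\<forall>x\<in>V. \<forall>y\<in>V. E x y \<longleftrightarrow> E (s x) (s y)"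
begin

definition "t = inv_into V s"

lemma sV: "x \<in> V \<Longrightarrow> s x \<in> V" using bij by (auto simp: bij_betw_def)
lemma tV: "x \<in> V \<Longrightarrow> t x \<in> V" using bij_betw_inv_into[OF bij] by (auto simp: bij_betw_def t_def)
lemma st: "x \<in> V \<Longrightarrow> s (t x) = x" using bij unfolding t_def by (simp add: bij_betw_def f_inv_into_f)
lemma ts: "x \<in> V \<Longrightarrow> t (s x) = x" using bij unfolding t_def by (simp add: bij_betw_def inv_into_f_f)
lemma injs: "inj_on s V" using bij by (simp add: bij_betw_def)
lemma injt: "inj_on t V" using bij_betw_inv_into[OF bij] by (simp add: bij_betw_def t_def)
lemma tpres: "x \<in> V \<Longrightarrow> y \<in> V \<Longrightarrow> E (t x) (t y) \<longleftrightarrow> E x y"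
  using pres tV st by metis

lemma sV': "\<forall>x\<in>V. s x \<in> V" using sV by blast
lemma tV': "\<forall>x\<in>V. t x \<in> V" using tV by blast
lemma spres: "\<forall>x\<in>V. \<forall>y\<in>V. E x y \<longrightarrow> E (s x) (s y)" using pres by blast
lemma tpres': "\<forall>x\<in>V. \<forall>y\<in>V. E x y \<longrightarrow> E (t x) (t y)" using tpres by blast

lemma gd: assumes "u \<in> V" "v \<in> V" shows "gdist V E (s u) (s v) = gdist V E u v"
proof (rule antisym)
  show "gdist V E (s u) (s v) \<le> gdist V E u v" by (rule gdist_map_le[OF sV' spres assms])
  have "gdist V E (t (s u)) (t (s v)) \<le> gdist V E (s u) (s v)"
    by (rule gdist_map_le[OF tV' tpres' sV[OF assms(1)] sV[OF assms(2)]])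
  then show "gdist V E u v \<le> gdist V E (s u) (s v)" using ts assms by simp
qed

lemma sp_map: assumes "k \<in> V" "l \<in> V"
  shows "shortest_paths V E (s k) (s l) = map s ` shortest_paths V E k l"
proof (intro equalityI subsetI)
  fix q assume q: "q \<in> shortest_paths V E (s k) (s l)"
  have w: "walk V E q" using sp_walk[OF q] .
  have qV: "set q \<subseteq> V" using w by (simp add: walk_def)
  have "walk V E (map t q)" using walk_map[OF tV' tpres' w] .
  moreover have "hd (map t q) = k" "last (map t q) = l"
    using sp_hd[OF q] sp_last[OF q] w ts assms by (auto simp: walk_def hd_map last_map)
  moreover have "length (map t q) = Suc (gdist V E k l)" using sp_len[OF q] gd assms by simp
  ultimately have "map t q \<in> shortest_paths V E k l" by (simp add: shortest_paths_def)
  moreover have "map s (map t q) = q" using qV st by (induction q) auto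
  ultimately show "q \<in> map s ` shortest_paths V E k l" by (metis image_eqI)
next
  fix q assume "q \<in> map s ` shortest_paths V E k l"
  then obtain p where p: "p \<in> shortest_paths V E k l" and q: "q = map s p" by blast
  have w: "walk V E p" using sp_walk[OF p] .
  have "walk V E q" using walk_map[OF sV' spres w] q by simp
  moreover have "hd q = s k" "last q = s l"
    using sp_hd[OF p] sp_last[OF p] w q by (auto simp: walk_def hd_map last_map)
  moreover have "length q = Suc (gdist V E (s k) (s l))" using sp_len[OF p] gd assms q by simp
  ultimately show "q \<in> shortest_paths V E (s k) (s l)" by (simp add: shortest_paths_def)
qed

lemma inj_map_sp: "inj_on (map s) (shortest_paths V E k l)"
proof (rule inj_onI)
  fix p q assume p: "p \<in> shortest_paths V E k l" and q: "q \<in> shortest_paths V E k l" and e: "map s p = map s q"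
  have "set p \<union> set q \<subseteq> V" using sp_walk[OF p] sp_walk[OF q] by (auto simp: walk_def)
  then have "inj_on s (set p \<union> set q)" using injs inj_on_subset by blast
  then show "p = q" using map_inj_on[OF e] by simp
qed

lemma nsp_inv: "k \<in> V \<Longrightarrow> l \<in> V \<Longrightarrow> nsp V E (s k) (s l) = nsp V E k l"
  unfolding nsp_def using sp_map card_image[OF inj_map_sp] by simp

lemma nsp_edge_inv: assumes "k \<in> V" "l \<in> V" "u \<in> V" "v \<in> V"
  shows "nsp_edge V E (s k) (s l) (s u) (s v) = nsp_edge V E k l u v"
proof -
  have h: "uses (map s p) (s u) (s v) = uses p u v" if "p \<in> shortest_paths V E k l" for p
  proof -
    have "set p \<subseteq> V" using sp_walk[OF that] by (simp add: walk_def)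
    then show ?thesis using uses_map[OF injs _ assms(3,4)] by blast
  qed
  have eq: "{q \<in> shortest_paths V E (s k) (s l). uses q (s u) (s v)} = map s ` {p \<in> shortest_paths V E k l. uses p u v}"
    unfolding sp_map[OF assms(1,2)] using h by blast
  have inj: "inj_on (map s) {p \<in> shortest_paths V E k l. uses p u v}"
    by (rule inj_on_subset[OF inj_map_sp]) blast
  show ?thesis unfolding nsp_edge_uses eq card_image[OF inj] ..
qed

lemma bij_minus: "k \<in> V \<Longrightarrow> bij_betw s (V - {k}) (V - {s k})"
  by (rule bij_betw_DiffI[OF bij bij_betw_singletonI[OF refl]]) (auto simp: sV)

lemma eb_inv: assumes "u \<in> V" "v \<in> V"
  shows "exp_edge_betw V E lam (s u) (s v) = exp_edge_betw V E lam u v"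
  unfolding exp_edge_betw_def
proof (rule arg_cong[where f = "\<lambda>x. (1/2) * x"])
  have "(\<Sum>k\<in>V. \<Sum>l\<in>V - {k}. real (nsp_edge V E k l (s u) (s v)) / real (nsp V E k l) * lam ^ gdist V E k l)
     = (\<Sum>k\<in>V. \<Sum>l\<in>V - {s k}. real (nsp_edge V E (s k) l (s u) (s v)) / real (nsp V E (s k) l) * lam ^ gdist V E (s k) l)"
    by (rule sum.reindex_bij_betw[OF bij, symmetric])
  also have "\<dots> = (\<Sum>k\<in>V. \<Sum>l\<in>V - {k}. real (nsp_edge V E (s k) (s l) (s u) (s v)) / real (nsp V E (s k) (s l)) * lam ^ gdist V E (s k) (s l))"
    by (rule sum.cong[OF refl], rule sum.reindex_bij_betw[OF bij_minus, symmetric]) simp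
  also have "\<dots> = (\<Sum>k\<in>V. \<Sum>l\<in>V - {k}. real (nsp_edge V E k l u v) / real (nsp V E k l) * lam ^ gdist V E k l)"
    using nsp_edge_inv nsp_inv gd assms by (intro sum.cong refl) auto
  finally show "(\<Sum>k\<in>V. \<Sum>l\<in>V - {k}. real (nsp_edge V E k l (s u) (s v)) / real (nsp V E k l) * lam ^ gdist V E k l)
     = (\<Sum>k\<in>V. \<Sum>l\<in>V - {k}. real (nsp_edge V E k l u v) / real (nsp V E k l) * lam ^ gdist V E k l)" .
qed

lemma c_inv: assumes "u \<in> V" shows "exp_c V E lam (s u) = exp_c V E lam u"
proof -
  have b: "bij_betw s (Nb u) (Nb (s u))"
  proof -
    have "s ` Nb u = Nb (s u)"
    proof (intro equalityI subsetI)
      fix x assume "x \<in> s ` Nb u"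
      then obtain y where y: "y \<in> V" "E u y" "x = s y" by blast
      then have "E (s u) (s y)" using spres assms by blast
      then show "x \<in> Nb (s u)" using y sV by blast
    next
      fix x assume x: "x \<in> Nb (s u)"
      then have xV: "x \<in> V" and e: "E (s u) x" by auto
      have "E (t (s u)) (t x)" using tpres' e sV[OF assms] xV by blast
      then have "E u (t x)" using ts[OF assms] by simp
      then have "t x \<in> Nb u" using tV[OF xV] by blast
      moreover have "x = s (t x)" using st[OF xV] by simp
      ultimately show "x \<in> s ` Nb u" by blast
    qed
    moreover have "inj_on s (Nb u)" by (rule inj_on_subset[OF injs]) blast
    ultimately show ?thesis by (simp add: bij_betw_def)
  qed
  have "exp_c V E lam (s u) = (\<Sum>v\<in>Nb u. exp_edge_betw V E lam (s u) (s v))"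
    unfolding exp_c_def by (rule sum.reindex_bij_betw[OF b, symmetric])
  also have "\<dots> = exp_c V E lam u" unfolding exp_c_def using eb_inv assms by (intro sum.cong refl) auto
  finally show ?thesis .
qed

lemma t_inv: assumes "u \<in> V" shows "exp_t V E lam (s u) = exp_t V E lam u"
proof -
  have "exp_t V E lam (s u) = (\<Sum>v\<in>V - {u}. real (gdist V E (s u) (s v)) * lam ^ gdist V E (s u) (s v))"
    unfolding exp_t_def by (rule sum.reindex_bij_betw[OF bij_minus[OF assms], symmetric])
  also have "\<dots> = exp_t V E lam u" unfolding exp_t_def using gd assms by (intro sum.cong refl) auto
  finally show ?thesis .
qed

lemma N_inv: "u \<in> V \<Longrightarrow> networkness V E lam (s u) = networkness V E lam u"
  by (simp add: networkness_def c_inv t_inv)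

end


lemma geo1: "(\<Sum>i\<in>{1..<D}. (lam::real) ^ i) * (lam - 1) = lam ^ D - lam" if "1 \<le> D"
  using that
proof (induction D rule: dec_induct)
  case base then show ?case by simp
next
  case (step D)
  have "{1..<Suc D} = insert D {1..<D}" using step by auto
  then show ?case using step by (simp add: algebra_simps)
qed

lemma geo2: "(\<Sum>i\<in>{1..<D}. real i * (lam::real) ^ i) * (lam - 1)^2 = lam - real D * lam ^ D + (real D - 1) * lam ^ (D + 1)" if "1 \<le> D"
  using that
proof (induction D rule: dec_induct)
  case base then show ?case by simp
next
  case (step D)
  have "{1..<Suc D} = insert D {1..<D}" using step by auto
  then have "(\<Sum>i\<in>{1..<Suc D}. real i * lam ^ i) * (lam - 1)^2 = (\<Sum>i\<in>{1..<D}. real i * lam ^ i) * (lam - 1)^2 + real D * lam ^ D * (lam - 1)^2"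
    by (simp add: algebra_simps)
  also have "\<dots> = lam - real (Suc D) * lam ^ Suc D + (real (Suc D) - 1) * lam ^ (Suc D + 1)"
    using step.IH by (simp add: power2_eq_square algebra_simps)
  finally show ?case .
qed

lemma frac_helper: "(0::real) < m \<Longrightarrow> (a + 1/m*b)/(c + 1/m*e) = (b + m*a)/(e + m*c)"
proof -
  assume m: "0 < m"
  have "a + 1/m*b = (b + m*a)/m" "c + 1/m*e = (e + m*c)/m" using m by (simp_all add: field_simps)
  then show ?thesis using m by simp
qed

definition B0 :: "nat \<Rightarrow> real \<Rightarrow> nat \<Rightarrow> real" where
  "B0 n lam D = (\<Sum>i\<in>{1..<D}. lam ^ i) + real (n - D) * lam ^ D"
definition B1 :: "nat \<Rightarrow> real \<Rightarrow> nat \<Rightarrow> real" where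
  "B1 n lam D = (\<Sum>i\<in>{1..<D}. real i * lam ^ i) + real (n - D) * (real D * lam ^ D)"

lemma lb_eq: assumes "2 \<le> D" "D < n" "0 < lam" "lam < 1"
  shows "lb_fun n lam D = B0 n lam D / B1 n lam D"
proof -
  have l1: "lam - 1 \<noteq> 0" using assms by simp
  have g0: "(lam ^ D - lam) / (lam - 1) = (\<Sum>i\<in>{1..<D}. lam ^ i)"
    using geo1[of D lam] assms l1 by (simp add: field_simps)
  have l2: "(lam - 1)^2 \<noteq> 0" using l1 by simp
  have g1: "(lam - real D * lam ^ D + (real D - 1) * lam ^ (D + 1)) / (lam - 1)^2 = (\<Sum>i\<in>{1..<D}. real i * lam ^ i)"
    using geo2[of D lam] assms l2 by (simp add: field_simps)
  have m: "0 < real (n - D)" using assms by simp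
  show ?thesis unfolding lb_fun_def g0 g1 B0_def B1_def by (rule frac_helper[OF m])
qed

lemma B0_pos: "0 < lam \<Longrightarrow> D < n \<Longrightarrow> 0 < B0 n lam D"
  unfolding B0_def by (intro add_nonneg_pos sum_nonneg) auto

lemma B1_pos: "0 < lam \<Longrightarrow> D < n \<Longrightarrow> 1 \<le> D \<Longrightarrow> 0 < B1 n lam D"
  unfolding B1_def by (intro add_nonneg_pos sum_nonneg) auto

lemma lb2_le1: assumes "3 \<le> n" "0 < lam" "lam < 1" shows "lb_fun n lam 2 \<le> 1"
proof -
  have "lb_fun n lam 2 = B0 n lam 2 / B1 n lam 2" using lb_eq assms by simp
  moreover have "B0 n lam 2 \<le> B1 n lam 2"
  proof -
    have e: "{1..<2::nat} = {1}" by auto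
    show ?thesis unfolding B0_def B1_def e using assms by simp
  qed
  moreover have "0 < B1 n lam 2" using B1_pos assms by simp
  ultimately show ?thesis by simp
qed

lemma core:
  fixes W :: "'a set" and d :: "'a \<Rightarrow> nat" and lam :: real
  assumes finW: "finite W" and cardW: "card W + 1 = n" and n3: "3 \<le> n"
    and lam: "0 < lam" "lam < 1"
    and dge: "\<forall>w\<in>W. 1 \<le> d w \<and> d w \<le> e"
    and lev: "\<forall>i\<in>{1..e}. \<exists>w\<in>W. d w = i"
  shows "\<exists>D\<in>{2..n - 1}. lb_fun n lam D \<le> (\<Sum>w\<in>W. lam ^ d w) / (\<Sum>w\<in>W. real (d w) * lam ^ d w)"
proof -
  define S0 where "S0 = (\<Sum>w\<in>W. lam ^ d w)"
  define S1 where "S1 = (\<Sum>w\<in>W. real (d w) * lam ^ d w)"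
  have Wne: "W \<noteq> {}" using cardW n3 by auto
  have S0p: "0 < S0" unfolding S0_def using finW Wne lam by (intro sum_pos) auto
  have S1p: "0 < S1" unfolding S1_def using finW Wne lam dge by (intro sum_pos) auto
  define x where "x = S1 / S0"
  define h where "h i = (real i - x) * lam ^ i" for i :: nat
  have e1: "1 \<le> e" using Wne dge by (meson equals0I order_trans)
  have sumh: "(\<Sum>w\<in>W. h (d w)) = 0"
  proof -
    have "(\<Sum>w\<in>W. h (d w)) = S1 - x * S0"
      unfolding h_def S0_def S1_def by (simp add: algebra_simps sum_subtractf sum_distrib_left)
    then show ?thesis using S0p unfolding x_def by simp
  qed
  define H where "H = Max (h ` {1..e})"
  have Hge: "h i \<le> H" if "i \<in> {1..e}" for i unfolding H_def using that by simp
  obtain j where j: "j \<in> {1..e}" "h j = H"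
    unfolding H_def using e1 by (metis (no_types, lifting) Max_in atLeastAtMost_iff empty_iff finite_atLeastAtMost finite_imageI image_iff image_is_empty order_refl)
  define g where "g i = (SOME w. w \<in> W \<and> d w = i)" for i
  have g: "g i \<in> W \<and> d (g i) = i" if "i \<in> {1..e}" for i
    unfolding g_def using lev that by (metis (mono_tags, lifting) someI_ex)
  have injg: "inj_on g {1..e}" by (rule inj_onI) (metis g)
  define G where "G = g ` {1..e}"
  have GW: "G \<subseteq> W" unfolding G_def using g by auto
  have cardG: "card G = e" unfolding G_def using card_image[OF injg] by simp
  have em: "e \<le> card W" using card_mono[OF finW GW] cardG by simp
  have "(\<Sum>w\<in>W. h (d w)) = (\<Sum>w\<in>G. h (d w)) + (\<Sum>w\<in>W - G. h (d w))"
    using sum.subset_diff[OF GW finW, of "\<lambda>w. h (d w)"] by linarith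
  also have "(\<Sum>w\<in>G. h (d w)) = (\<Sum>i\<in>{1..e}. h i)"
    unfolding G_def using sum.reindex[OF injg, of "\<lambda>w. h (d w)"] g by simp
  also have "(\<Sum>w\<in>W - G. h (d w)) \<le> (\<Sum>w\<in>W - G. H)"
    using dge Hge by (intro sum_mono) auto
  also have "(\<Sum>w\<in>W - G. H) = real (card W - e) * H"
    using card_Diff_subset[OF finite_subset[OF GW finW] GW] cardG by simp
  finally have st1: "0 \<le> (\<Sum>i\<in>{1..e}. h i) + real (card W - e) * H" using sumh by simp
  have split: "{1..e} = {1..<j} \<union> {j..e}" using j by auto
  have "(\<Sum>i\<in>{1..e}. h i) = (\<Sum>i\<in>{1..<j}. h i) + (\<Sum>i\<in>{j..e}. h i)"
    unfolding split by (rule sum.union_disjoint) auto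
  also have "(\<Sum>i\<in>{j..e}. h i) \<le> (\<Sum>i\<in>{j..e}. H)"
    using j Hge by (intro sum_mono) auto
  also have "(\<Sum>i\<in>{j..e}. H) = real (e + 1 - j) * H" by simp
  finally have st1b: "(\<Sum>i\<in>{1..e}. h i) \<le> (\<Sum>i\<in>{1..<j}. h i) + real (e + 1 - j) * H" by simp
  have natq: "real (e + 1 - j) + real (card W - e) = real (n - j)" using j em cardW by auto
  have "real (n - j) * H = real (e + 1 - j) * H + real (card W - e) * H"
    unfolding natq[symmetric] by (simp add: distrib_right)
  then have st2: "0 \<le> (\<Sum>i\<in>{1..<j}. h i) + real (n - j) * H"
    using st1 st1b by linarith
  show ?thesis
  proof (cases "j = 1")
    case True
    then have "0 \<le> real (n - 1) * ((1 - x) * lam)" using st2 j unfolding h_def by simp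
    then have "x \<le> 1" using n3 lam by (simp add: zero_le_mult_iff)
    then have "S1 \<le> S0" using S0p unfolding x_def by (simp add: divide_le_eq)
    then have "1 \<le> S0 / S1" using S1p by simp
    moreover have "lb_fun n lam 2 \<le> 1" using lb2_le1 n3 lam by simp
    ultimately show ?thesis using n3 unfolding S0_def S1_def by (intro bexI[of _ 2]) auto
  next
    case False
    then have D2: "2 \<le> j" and Dn: "j < n" using j em cardW by auto
    have "B1 n lam j - x * B0 n lam j = (\<Sum>i\<in>{1..<j}. h i) + real (n - j) * H"
      unfolding B0_def B1_def h_def j(2)[symmetric]
      by (simp add: algebra_simps sum_subtractf sum_distrib_left)
    then have "x * B0 n lam j \<le> B1 n lam j" using st2 by simp
    then have "S1 * B0 n lam j \<le> S0 * B1 n lam j" using S0p unfolding x_def by (simp add: field_simps)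
    then have "B0 n lam j / B1 n lam j \<le> S0 / S1"
      using S1p B1_pos[OF lam(1) Dn] D2 by (simp add: divide_simps mult.commute)
    then show ?thesis using lb_eq[OF D2 Dn lam] D2 Dn unfolding S0_def S1_def
      by (intro bexI[of _ j]) auto
  qed
qed



context cgraph begin

lemma t_pos: assumes "u \<in> V" "2 \<le> card V" "0 < lam" shows "0 < exp_t V E lam u"
proof -
  have "card (V - {u}) \<ge> 1" using assms finV by simp
  then obtain v where v: "v \<in> V - {u}" by (metis card.empty ex_in_conv not_one_le_zero)
  have "0 < gdist V E u v" using gdist_pos assms v by auto
  then have "0 < real (gdist V E u v) * lam ^ gdist V E u v" using assms by simp
  then show ?thesis unfolding exp_t_def
    by (intro sum_pos2[OF _ v]) (use finV assms in auto)
qed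

lemma N_lower: assumes u: "u \<in> V" and c3: "3 \<le> card V" and lam: "0 < lam" "lam < 1"
  shows "\<exists>D\<in>{2..card V - 1}. lb_fun (card V) lam D \<le> networkness V E lam u"
proof -
  define W where "W = V - {u}"
  define e where "e = Max (gdist V E u ` W)"
  have finW: "finite W" unfolding W_def using finV by simp
  have cW: "card W + 1 = card V" unfolding W_def using finV u c3 by simp
  have Wne: "W \<noteq> {}" using cW c3 by auto
  have dge: "\<forall>w\<in>W. 1 \<le> gdist V E u w \<and> gdist V E u w \<le> e"
  proof
    fix w assume w: "w \<in> W"
    have "0 < gdist V E u w" using gdist_pos u w unfolding W_def by auto
    moreover have "gdist V E u w \<le> e" unfolding e_def using finW w by simp
    ultimately show "1 \<le> gdist V E u w \<and> gdist V E u w \<le> e" by simp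
  qed
  have "e \<in> gdist V E u ` W" unfolding e_def by (rule Max_in) (use finW Wne in auto)
  then obtain w0 where w0: "w0 \<in> W" "gdist V E u w0 = e" by auto
  have w0V: "w0 \<in> V" using w0 unfolding W_def by simp
  obtain p where p: "p \<in> shortest_paths V E u w0" using sp_nonempty[OF u w0V] by blast
  have lev: "\<forall>i\<in>{1..e}. \<exists>w\<in>W. gdist V E u w = i"
  proof
    fix i assume i: "i \<in> {1..e}"
    have il: "i < length p" using sp_len[OF p] w0 i by simp
    have g: "gdist V E u (p ! i) = i" by (rule sp_level[OF p il])
    have "p ! i \<in> V" using sp_walk[OF p] il by (auto simp: walk_def)
    moreover have "p ! i \<noteq> u" using g gdist_self[OF u] i by auto
    ultimately show "\<exists>w\<in>W. gdist V E u w = i" using g unfolding W_def by blast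
  qed
  obtain D where D: "D \<in> {2..card V - 1}"
    and le: "lb_fun (card V) lam D \<le> (\<Sum>w\<in>W. lam ^ gdist V E u w) / (\<Sum>w\<in>W. real (gdist V E u w) * lam ^ gdist V E u w)"
    using core[OF finW cW c3 lam dge lev] by blast
  have tp: "0 < exp_t V E lam u" using t_pos[OF u _ lam(1)] c3 by simp
  have "(\<Sum>w\<in>W. lam ^ gdist V E u w) / (\<Sum>w\<in>W. real (gdist V E u w) * lam ^ gdist V E u w)
      = S0 lam u / exp_t V E lam u" unfolding S0_def exp_t_def W_def ..
  also have "\<dots> \<le> networkness V E lam u" unfolding networkness_def
    using c_ge[OF u lam(1)] tp by (simp add: divide_right_mono)
  finally have "lb_fun (card V) lam D \<le> networkness V E lam u" using le by linarith
  then show ?thesis using D by blast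
qed

lemma min_lower: assumes c3: "3 \<le> card V" and lam: "0 < lam" "lam < 1"
  shows "Min (lb_fun (card V) lam ` {2..card V - 1}) \<le> min_networkness V E lam"
proof -
  have Vne: "V \<noteq> {}" using c3 by auto
  show ?thesis unfolding min_networkness_def
  proof (rule Min.boundedI)
    show "finite (networkness V E lam ` V)" using finV by simp
    show "networkness V E lam ` V \<noteq> {}" using Vne by simp
    fix a assume "a \<in> networkness V E lam ` V"
    then obtain u where u: "u \<in> V" "a = networkness V E lam u" by blast
    obtain D where D: "D \<in> {2..card V - 1}" "lb_fun (card V) lam D \<le> a" using N_lower[OF u(1) c3 lam] u by blast
    have "Min (lb_fun (card V) lam ` {2..card V - 1}) \<le> lb_fun (card V) lam D" using D by simp
    then show "Min (lb_fun (card V) lam ` {2..card V - 1}) \<le> a" using D by linarith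
  qed
qed

lemma min_upper: assumes c3: "2 \<le> card V" and lam: "0 < lam"
  shows "min_networkness V E lam \<le> 1"
proof -
  have Vne: "V \<noteq> {}" using c3 by auto
  have "\<exists>u\<in>V. networkness V E lam u \<le> 1"
  proof (rule ccontr)
    assume "\<not> (\<exists>u\<in>V. networkness V E lam u \<le> 1)"
    then have "\<forall>u\<in>V. exp_t V E lam u < exp_c V E lam u"
      using t_pos[OF _ c3 lam] by (auto simp: networkness_def not_le less_divide_eq)
    then have "(\<Sum>u\<in>V. exp_t V E lam u) < (\<Sum>u\<in>V. exp_c V E lam u)"
      using finV Vne by (intro sum_strict_mono) auto
    then show False using sum_c_t by simp
  qed
  then obtain u where "u \<in> V" "networkness V E lam u \<le> 1" by blast
  then show ?thesis unfolding min_networkness_def using finV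
    by (meson Min_le dual_order.trans finite_imageI imageI)
qed

lemma vt: assumes vt: "vertex_transitive V E" and c3: "2 \<le> card V" and lam: "0 < lam"
  shows "min_networkness V E lam = 1"
proof -
  have Vne: "V \<noteq> {}" using c3 by auto
  then obtain u0 where u0: "u0 \<in> V" by blast
  have eq: "networkness V E lam u = networkness V E lam u0" if u: "u \<in> V" for u
  proof -
    obtain s where s: "bij_betw s V V" "\<forall>x\<in>V. \<forall>y\<in>V. E x y \<longleftrightarrow> E (s x) (s y)" "s u0 = u"
      using vt u0 u unfolding vertex_transitive_def by blast
    interpret cauto V E s using s(1,2) by unfold_locales
    show ?thesis using N_inv[OF u0] s(3) by simp
  qed
  define x where "x = networkness V E lam u0"
  have "exp_c V E lam u = x * exp_t V E lam u" if "u \<in> V" for u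
    using eq[OF that] t_pos[OF that c3 lam] unfolding x_def networkness_def by (simp add: field_simps)
  then have "(\<Sum>u\<in>V. exp_c V E lam u) = x * (\<Sum>u\<in>V. exp_t V E lam u)"
    by (simp add: sum_distrib_left)
  moreover have "0 < (\<Sum>u\<in>V. exp_t V E lam u)" using finV Vne t_pos[OF _ c3 lam] by (intro sum_pos) auto
  ultimately have "x = 1" using sum_c_t by simp
  then have "networkness V E lam ` V = {1}" using eq Vne unfolding x_def by auto
  then show ?thesis unfolding min_networkness_def by simp
qed

end


lemma broom_sg: "simple_graph (broom_V n) (broom_E n D)"
  unfolding simple_graph_def broom_V_def broom_E_def by auto

lemma walk_upt: assumes "i \<le> D" "i < n" shows "walk (broom_V n) (broom_E n D) [0..<Suc i]"
  unfolding walk_def broom_V_def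
proof (intro conjI allI impI)
  fix k assume k: "Suc k < length [0..<Suc i]"
  then have "[0..<Suc i] ! k = k" "[0..<Suc i] ! Suc k = Suc k" by (simp_all del: upt_Suc)
  then show "broom_E n D ([0..<Suc i] ! k) ([0..<Suc i] ! Suc k)"
    using k assms by (simp del: upt_Suc add: broom_E_def)
qed (use assms in auto)

lemma walk_leaf: assumes "2 \<le> D" "D < i" "i < n"
  shows "walk (broom_V n) (broom_E n D) ([0..<D] @ [i])"
proof (rule walk_append)
  have "[0..<D] = [0..<Suc (D - 1)]" using assms by simp
  then show "walk (broom_V n) (broom_E n D) [0..<D]" using walk_upt[of "D - 1" D n] assms by simp
  show "walk (broom_V n) (broom_E n D) [i]" using assms by (simp add: broom_V_def)
  show "broom_E n D (last [0..<D]) (hd [i])" using assms by (simp add: broom_E_def)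
qed

definition path0 :: "nat \<Rightarrow> nat \<Rightarrow> nat list" where
  "path0 D i = (if i \<le> D then [0..<Suc i] else [0..<D] @ [i])"

lemma path0: assumes "2 \<le> D" "D < n" "i < n"
  shows "walk (broom_V n) (broom_E n D) (path0 D i)" "hd (path0 D i) = 0" "last (path0 D i) = i"
    "length (path0 D i) = Suc (min i D)"
  using walk_upt[of i D n] walk_leaf[of D i n] assms
  by (auto simp: path0_def hd_append)

lemma broom_cg: assumes "2 \<le> D" "D < n" shows "connected_graph (broom_V n) (broom_E n D)"
  unfolding connected_graph_def
proof (intro ballI)
  fix u v assume u: "u \<in> broom_V n" and v: "v \<in> broom_V n"
  have un: "u < n" and vn: "v < n" using u v by (auto simp: broom_V_def)
  let ?p = "rev (path0 D u) @ tl (path0 D v)"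
  have sym: "broom_E n D x y \<Longrightarrow> broom_E n D y x" for x y by (auto simp: broom_E_def)
  have wr: "walk (broom_V n) (broom_E n D) (rev (path0 D u))"
    by (rule walk_rev[where E="broom_E n D"], rule sym, assumption, rule path0(1)[OF assms un])
  have ne: "path0 D u \<noteq> []" "path0 D v \<noteq> []" using path0(4)[OF assms un] path0(4)[OF assms vn] by auto
  have "walk (broom_V n) (broom_E n D) ?p"
    using walk_append_tl[OF wr path0(1)[OF assms vn]] path0(2)[OF assms un] path0(2)[OF assms vn] ne
    by (simp add: last_rev)
  moreover have "hd ?p = u" using ne path0(3)[OF assms un] by (simp add: hd_rev)
  moreover have "last ?p = v" using last_append_tl[of "rev (path0 D u)" "path0 D v"] ne
      path0(2,3)[OF assms un] path0(2,3)[OF assms vn] by (simp add: last_rev)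
  ultimately show "\<exists>p. walk (broom_V n) (broom_E n D) p \<and> hd p = u \<and> last p = v" by blast
qed

lemma lev_step: "broom_E n D x y \<Longrightarrow> min y D \<le> Suc (min x D)"
  unfolding broom_E_def by auto

lemma walk_lev: assumes "walk (broom_V n) (broom_E n D) p" "hd p = 0"
  shows "k < length p \<Longrightarrow> min (p ! k) D \<le> k"
proof (induction k)
  case 0 then show ?case using assms by (cases p) auto
next
  case (Suc k)
  then have "broom_E n D (p ! k) (p ! Suc k)" using assms(1) unfolding walk_def by blast
  then show ?case using lev_step Suc by fastforce
qed

lemma broom_gdist: assumes "2 \<le> D" "D < n" "i < n"
  shows "gdist (broom_V n) (broom_E n D) 0 i = min i D"
proof -
  interpret cgraph "broom_V n" "broom_E n D" using broom_sg broom_cg[OF assms(1,2)] by unfold_locales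
  have iV: "i \<in> broom_V n" "0 \<in> broom_V n" using assms by (auto simp: broom_V_def)
  have le: "gdist (broom_V n) (broom_E n D) 0 i \<le> min i D"
    using gdist_le[OF path0(1-3)[OF assms]] path0(4)[OF assms] by simp
  obtain p where p: "walk (broom_V n) (broom_E n D) p" "hd p = 0" "last p = i"
    "length p = Suc (gdist (broom_V n) (broom_E n D) 0 i)" using gdist_ex[OF iV(2,1)] by blast
  have "last p = p ! (length p - 1)" using p(1) by (simp add: walk_def last_conv_nth)
  then have "min i D \<le> length p - 1" using walk_lev[OF p(1,2), of "length p - 1"] p by simp
  then show ?thesis using le p(4) by simp
qed

lemma broom_N0: assumes "2 \<le> D" "D < n" "0 < lam" "lam < 1"
  shows "networkness (broom_V n) (broom_E n D) lam 0 = lb_fun n lam D"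
proof -
  interpret cgraph "broom_V n" "broom_E n D" using broom_sg broom_cg[OF assms(1,2)] by unfold_locales
  have z: "0 \<in> broom_V n" using assms by (simp add: broom_V_def)
  have nb: "{v \<in> broom_V n. broom_E n D 0 v} = {1}" using assms by (auto simp: broom_V_def broom_E_def)
  have split: "broom_V n - {0} = {1..<D} \<union> {D..<n}" using assms by (auto simp: broom_V_def)
  have dis: "{1..<D} \<inter> {D..<n} = {}" by auto
  have gd: "gdist (broom_V n) (broom_E n D) 0 l = min l D" if "l \<in> broom_V n" for l
    using broom_gdist assms that by (simp add: broom_V_def)
  have s0: "S0 lam 0 = B0 n lam D"
  proof -
    have "S0 lam 0 = (\<Sum>l\<in>broom_V n - {0}. lam ^ min l D)" unfolding S0_def using gd by (intro sum.cong) auto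
    also have "\<dots> = (\<Sum>l\<in>{1..<D}. lam ^ min l D) + (\<Sum>l\<in>{D..<n}. lam ^ min l D)"
      unfolding split by (rule sum.union_disjoint) auto
    also have "(\<Sum>l\<in>{1..<D}. lam ^ min l D) = (\<Sum>l\<in>{1..<D}. lam ^ l)" by (intro sum.cong) auto
    also have "(\<Sum>l\<in>{D..<n}. lam ^ min l D) = (\<Sum>l\<in>{D..<n}. lam ^ D)" by (intro sum.cong) auto
    finally show ?thesis by (simp add: B0_def)
  qed
  have t0: "exp_t (broom_V n) (broom_E n D) lam 0 = B1 n lam D"
  proof -
    have "exp_t (broom_V n) (broom_E n D) lam 0 = (\<Sum>l\<in>broom_V n - {0}. real (min l D) * lam ^ min l D)"
      unfolding exp_t_def using gd by (intro sum.cong) auto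
    also have "\<dots> = (\<Sum>l\<in>{1..<D}. real (min l D) * lam ^ min l D) + (\<Sum>l\<in>{D..<n}. real (min l D) * lam ^ min l D)"
      unfolding split by (rule sum.union_disjoint) auto
    also have "(\<Sum>l\<in>{1..<D}. real (min l D) * lam ^ min l D) = (\<Sum>l\<in>{1..<D}. real l * lam ^ l)" by (intro sum.cong) auto
    also have "(\<Sum>l\<in>{D..<n}. real (min l D) * lam ^ min l D) = (\<Sum>l\<in>{D..<n}. real D * lam ^ D)" by (intro sum.cong) auto
    finally show ?thesis by (simp add: B1_def)
  qed
  have "exp_c (broom_V n) (broom_E n D) lam 0 = S0 lam 0" using c_leaf[OF z nb] .
  then show ?thesis unfolding networkness_def using s0 t0 lb_eq assms by simp
qed


theorem theorem9:
  fixes V :: "'a set" and E :: "'a \<Rightarrow> 'a \<Rightarrow> bool" and lam :: real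
  assumes "0 < lam" and "lam < 1"
    and "simple_graph V E" and "connected_graph V E" and "card V \<ge> 3"
  shows "Min (lb_fun (card V) lam ` {2..card V - 1}) \<le> min_networkness V E lam
       \<and> min_networkness V E lam \<le> 1
       \<and> (\<exists>D\<in>{2..card V - 1}.
            networkness (broom_V (card V)) (broom_E (card V) D) lam 0
              = Min (lb_fun (card V) lam ` {2..card V - 1})
          \<and> min_networkness (broom_V (card V)) (broom_E (card V) D) lam
              = Min (lb_fun (card V) lam ` {2..card V - 1}))
       \<and> (vertex_transitive V E \<longrightarrow> min_networkness V E lam = 1)"
proof -
  interpret cgraph V E using assms(3,4) by unfold_locales
  let ?n = "card V"
  let ?M = "Min (lb_fun ?n lam ` {2..?n - 1})"
  have A: "?M \<le> min_networkness V E lam" using min_lower assms by simp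
  have B: "min_networkness V E lam \<le> 1" using min_upper assms by simp
  have D: "vertex_transitive V E \<longrightarrow> min_networkness V E lam = 1" using vt assms by simp
  have "?M \<in> lb_fun ?n lam ` {2..?n - 1}" by (rule Min_in) (use assms in auto)
  then obtain D0 where D0: "D0 \<in> {2..?n - 1}" "lb_fun ?n lam D0 = ?M" by auto
  have D2: "2 \<le> D0" and Dn: "D0 < ?n" using D0 assms by auto
  have N0: "networkness (broom_V ?n) (broom_E ?n D0) lam 0 = ?M"
    using broom_N0[OF D2 Dn assms(1,2)] D0 by simp
  have cb: "cgraph (broom_V ?n) (broom_E ?n D0)" using broom_sg broom_cg[OF D2 Dn] by unfold_locales
  have cardb: "card (broom_V ?n) = ?n" by (simp add: broom_V_def)
  have lo: "?M \<le> min_networkness (broom_V ?n) (broom_E ?n D0) lam"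
    using cgraph.min_lower[OF cb, of lam] cardb assms by simp
  have up: "min_networkness (broom_V ?n) (broom_E ?n D0) lam \<le> networkness (broom_V ?n) (broom_E ?n D0) lam 0"
    unfolding min_networkness_def using Dn by (intro Min_le) (auto simp: broom_V_def)
  have C: "\<exists>D\<in>{2..?n - 1}. networkness (broom_V ?n) (broom_E ?n D) lam 0 = ?M
          \<and> min_networkness (broom_V ?n) (broom_E ?n D) lam = ?M"
  proof -
    have "min_networkness (broom_V ?n) (broom_E ?n D0) lam = ?M" using N0 lo up by linarith
    then show ?thesis using D0(1) N0 by blast
  qed
  show ?thesis using A B C D by blast
qed

end
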